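(* Let $P$ be a finite poset of dimension $2$ such that no strong copy of $P$ in a two-dimensional grid $[k]\times[l]$ contains two neighboring points. Then for all $k,l\ge1$, $sat^*([k]\times[l],P)\ge\max\{k,l\}$.
   Context: $[k]\times[l]$ is ordered coordinatewise. Two points of $[k]\times[l]$ are neighboring if they agree in one coordinate and differ by exactly $1$ in the other. The dimension of a poset $P$ is the least $d$ such that there are $d$ linear orders $\pi_1,\dots,\pi_d$ of $P$ with $p<_Pq$ iff $\pi_i(p)<\pi_i(q)$ for all $i$. A strong copy of $P$ in a poset $R$ is the image of an injection $i:P\to R$ with $p\le_P p'\iff i(p)\le_R i(p')$. A subset $F\subseteq Q$ is strong $P$-saturated if $F$ contains no strong copy of $P$ but for every $x\in Q\setminus F$, $F\cup\{x\}$ contains a strong copy of $P$; $sat^*(Q,P)$ is the minimum size of a strong $P$-saturated subset of $Q$. *)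

theory Defs
  imports Main
begin

text \<open>A linear order of P is represented by an injective map into nat.
  A realizer of the strict order lt is a list of such maps whose intersection is lt.\<close>
definition realizer :: "('a \<Rightarrow> 'a \<Rightarrow> bool) \<Rightarrow> ('a \<Rightarrow> nat) list \<Rightarrow> bool" where
  "realizer lt L \<longleftrightarrow> (\<forall>\<pi>\<in>set L. inj \<pi>) \<and>
     (\<forall>p q. lt p q \<longleftrightarrow> (\<forall>\<pi>\<in>set L. \<pi> p < \<pi> q))"

definition order_dim :: "('a \<Rightarrow> 'a \<Rightarrow> bool) \<Rightarrow> nat" where
  "order_dim lt = (LEAST d. \<exists>L. length L = d \<and> realizer lt L)"

definition grid :: "nat \<Rightarrow> nat \<Rightarrow> (nat \<times> nat) set" where
  "grid k l = {1..k} \<times> {1..l}"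

definition grid_le :: "nat \<times> nat \<Rightarrow> nat \<times> nat \<Rightarrow> bool" where
  "grid_le x y \<longleftrightarrow> fst x \<le> fst y \<and> snd x \<le> snd y"

definition neighboring :: "nat \<times> nat \<Rightarrow> nat \<times> nat \<Rightarrow> bool" where
  "neighboring x y \<longleftrightarrow>
     (fst x = fst y \<and> (snd x = snd y + 1 \<or> snd y = snd x + 1)) \<or>
     (snd x = snd y \<and> (fst x = fst y + 1 \<or> fst y = fst x + 1))"

text \<open>i is a strong embedding of the poset (UNIV :: 'a, le) into the subset F of the grid order;
  its image is a strong copy of P contained in F.\<close>
definition strong_emb :: "('a \<Rightarrow> 'a \<Rightarrow> bool) \<Rightarrow> ('a \<Rightarrow> nat \<times> nat) \<Rightarrow> (nat \<times> nat) set \<Rightarrow> bool" where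
  "strong_emb le i F \<longleftrightarrow> inj i \<and> range i \<subseteq> F \<and>
     (\<forall>p p'. le p p' \<longleftrightarrow> grid_le (i p) (i p'))"

definition contains_strong_copy :: "('a \<Rightarrow> 'a \<Rightarrow> bool) \<Rightarrow> (nat \<times> nat) set \<Rightarrow> bool" where
  "contains_strong_copy le F \<longleftrightarrow> (\<exists>i. strong_emb le i F)"

definition strong_saturated :: "('a \<Rightarrow> 'a \<Rightarrow> bool) \<Rightarrow> (nat \<times> nat) set \<Rightarrow> (nat \<times> nat) set \<Rightarrow> bool" where
  "strong_saturated le Q F \<longleftrightarrow> F \<subseteq> Q \<and> \<not> contains_strong_copy le F \<and>
     (\<forall>x\<in>Q - F. contains_strong_copy le (insert x F))"

definition sat_star :: "(nat \<times> nat) set \<Rightarrow> ('a \<Rightarrow> 'a \<Rightarrow> bool) \<Rightarrow> nat" where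
  "sat_star Q le = Inf {card F | F. strong_saturated le Q F}"

end

theory Submission
  imports Defs
begin

lemma grid_fin: "finite (grid k l)"
  unfolding grid_def by simp

lemma two_elems:
  assumes dim2: "order_dim ((<) :: 'a::order \<Rightarrow> 'a \<Rightarrow> bool) = 2"
  shows "\<exists>u v::'a. u \<noteq> v"
proof (rule ccontr)
  assume "\<not> (\<exists>u v::'a. u \<noteq> v)"
  then have eq: "\<And>u v::'a. u = v" by blast
  have "realizer ((<) :: 'a \<Rightarrow> 'a \<Rightarrow> bool) [\<lambda>_. 0]"
  proof -
    have "\<And>p q::'a. \<not> p < q" using eq by (metis order.irrefl)
    then show ?thesis unfolding realizer_def inj_def using eq by auto
  qed
  then have "\<exists>L. length L = 1 \<and> realizer ((<) :: 'a \<Rightarrow> 'a \<Rightarrow> bool) L"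
    by (intro exI[of _ "[\<lambda>_. 0]"]) simp
  then have "order_dim ((<) :: 'a \<Rightarrow> 'a \<Rightarrow> bool) \<le> 1"
    unfolding order_dim_def by (rule Least_le)
  with dim2 show False by simp
qed

lemma left_case:
  fixes F :: "(nat \<times> nat) set"
  assumes sat: "strong_saturated ((\<le>)::'a::order \<Rightarrow> 'a \<Rightarrow> bool) (grid k l) F"
    and no_nb: "\<forall>k' l' (i :: 'a \<Rightarrow> nat \<times> nat) p q.
                 strong_emb (\<le>) i (grid k' l') \<longrightarrow> \<not> neighboring (i p) (i q)"
    and pg: "(a,c) \<in> grid k l"
    and emp: "\<forall>y. (a,y) \<notin> F"
    and qF: "(a-1,c) \<in> F" and a2: "a \<ge> 2"
    and mx: "\<forall>y. (a-1,y) \<in> F \<longrightarrow> y \<le> c"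
  shows False
proof -
  have FQ: "F \<subseteq> grid k l" and nc: "\<not> contains_strong_copy ((\<le>)::'a \<Rightarrow> 'a \<Rightarrow> bool) F"
    and satx: "\<forall>x\<in>grid k l - F. contains_strong_copy ((\<le>)::'a \<Rightarrow> 'a \<Rightarrow> bool) (insert x F)"
    using sat unfolding strong_saturated_def by auto
  have pnF: "(a,c) \<notin> F" using emp by blast
  obtain i :: "'a \<Rightarrow> nat \<times> nat" where i: "strong_emb (\<le>) i (insert (a,c) F)"
    using satx pg pnF unfolding contains_strong_copy_def by blast
  have inj: "inj i" and rng: "range i \<subseteq> insert (a,c) F"
    and ord: "\<And>p p'. p \<le> p' \<longleftrightarrow> grid_le (i p) (i p')"
    using i unfolding strong_emb_def by auto
  have "range i \<subseteq> grid k l" using rng FQ pg by (meson insert_subset subset_trans)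
  then have ig: "strong_emb (\<le>) i (grid k l)" using i unfolding strong_emb_def by simp
  have "(a,c) \<in> range i"
  proof (rule ccontr)
    assume "(a,c) \<notin> range i"
    then have "range i \<subseteq> F" using rng by (auto simp: subset_iff)
    then have "strong_emb (\<le>) i F" using i unfolding strong_emb_def by simp
    with nc show False unfolding contains_strong_copy_def by blast
  qed
  then obtain e where ie: "i e = (a,c)" by (metis rangeE)
  have qn: "(a-1,c) \<notin> range i"
  proof
    assume "(a-1,c) \<in> range i"
    then obtain e' where "i e' = (a-1,c)" by (metis rangeE)
    with ie a2 have "neighboring (i e') (i e)" unfolding neighboring_def by auto
    with no_nb ig show False by blast
  qed
  define j where "j = i(e := (a-1,c))"
  have others: "\<And>v. v \<noteq> e \<Longrightarrow> i v \<in> F \<and> i v \<noteq> (a-1,c)"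
  proof -
    fix v assume "v \<noteq> e"
    then have "i v \<noteq> (a,c)" using inj ie by (metis injD)
    moreover have iv: "i v \<in> range i" by (rule rangeI)
    ultimately show "i v \<in> F \<and> i v \<noteq> (a-1,c)" using rng qn by (metis insertE subsetD)
  qed
  have "strong_emb (\<le>) j F"
    unfolding strong_emb_def
  proof (intro conjI allI)
    show "inj j"
    proof (rule injI)
      fix x y assume jxy: "j x = j y"
      show "x = y"
      proof (cases "x = e")
        case True
        then show ?thesis using jxy others[of y] unfolding j_def by (cases "y = e") auto
      next
        case False
        then show ?thesis using jxy others[of x] injD[OF inj, of x y] unfolding j_def
          by (cases "y = e") auto
      qed
    qed
    show "range j \<subseteq> F"
    proof
      fix z assume "z \<in> range j"
      then obtain v where "z = j v" by (metis rangeE)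
      then show "z \<in> F" using others[of v] qF unfolding j_def by (cases "v = e") auto
    qed
    fix p p' :: 'a
    show "p \<le> p' \<longleftrightarrow> grid_le (j p) (j p')"
    proof (cases "p = e")
      case True
      show ?thesis
      proof (cases "p' = e")
        case True
        with \<open>p = e\<close> show ?thesis unfolding grid_le_def by simp
      next
        case False
        obtain x y where xy: "i p' = (x,y)" by fastforce
        from others[OF False] xy have "(x,y) \<in> F" "(x,y) \<noteq> (a-1,c)" by auto
        then have "x \<noteq> a" "x = a - 1 \<longrightarrow> y \<le> c" using emp mx by auto
        then have "grid_le (a-1,c) (x,y) = grid_le (a,c) (x,y)"
          using \<open>(x,y) \<noteq> (a-1,c)\<close> a2 unfolding grid_le_def by auto
        then show ?thesis using ord[of p p'] True False xy ie unfolding j_def by simp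
      qed
    next
      case False
      show ?thesis
      proof (cases "p' = e")
        case True
        obtain x y where xy: "i p = (x,y)" by fastforce
        from others[OF False] xy have "(x,y) \<in> F" by auto
        then have "x \<noteq> a" using emp by auto
        then have "grid_le (x,y) (a-1,c) = grid_le (x,y) (a,c)"
          using a2 unfolding grid_le_def by auto
        then show ?thesis using ord[of p p'] True False xy ie unfolding j_def by simp
      next
        case False
        then show ?thesis using ord[of p p'] \<open>p \<noteq> e\<close> unfolding j_def by simp
      qed
    qed
  qed
  with nc show False unfolding contains_strong_copy_def by blast
qed

lemma right_case:
  fixes F :: "(nat \<times> nat) set"
  assumes sat: "strong_saturated ((\<le>)::'a::order \<Rightarrow> 'a \<Rightarrow> bool) (grid k l) F"
    and no_nb: "\<forall>k' l' (i :: 'a \<Rightarrow> nat \<times> nat) p q.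
                 strong_emb (\<le>) i (grid k' l') \<longrightarrow> \<not> neighboring (i p) (i q)"
    and pg: "(a,c) \<in> grid k l"
    and emp: "\<forall>y. (a,y) \<notin> F"
    and qF: "(a+1,c) \<in> F"
    and mn: "\<forall>y. (a+1,y) \<in> F \<longrightarrow> c \<le> y"
  shows False
proof -
  have FQ: "F \<subseteq> grid k l" and nc: "\<not> contains_strong_copy ((\<le>)::'a \<Rightarrow> 'a \<Rightarrow> bool) F"
    and satx: "\<forall>x\<in>grid k l - F. contains_strong_copy ((\<le>)::'a \<Rightarrow> 'a \<Rightarrow> bool) (insert x F)"
    using sat unfolding strong_saturated_def by auto
  have pnF: "(a,c) \<notin> F" using emp by blast
  obtain i :: "'a \<Rightarrow> nat \<times> nat" where i: "strong_emb (\<le>) i (insert (a,c) F)"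
    using satx pg pnF unfolding contains_strong_copy_def by blast
  have inj: "inj i" and rng: "range i \<subseteq> insert (a,c) F"
    and ord: "\<And>p p'. p \<le> p' \<longleftrightarrow> grid_le (i p) (i p')"
    using i unfolding strong_emb_def by auto
  have "range i \<subseteq> grid k l" using rng FQ pg by (meson insert_subset subset_trans)
  then have ig: "strong_emb (\<le>) i (grid k l)" using i unfolding strong_emb_def by simp
  have "(a,c) \<in> range i"
  proof (rule ccontr)
    assume "(a,c) \<notin> range i"
    then have "range i \<subseteq> F" using rng by (auto simp: subset_iff)
    then have "strong_emb (\<le>) i F" using i unfolding strong_emb_def by simp
    with nc show False unfolding contains_strong_copy_def by blast
  qed
  then obtain e where ie: "i e = (a,c)" by (metis rangeE)
  have qn: "(a+1,c) \<notin> range i"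
  proof
    assume "(a+1,c) \<in> range i"
    then obtain e' where "i e' = (a+1,c)" by (metis rangeE)
    with ie have "neighboring (i e') (i e)" unfolding neighboring_def by auto
    with no_nb ig show False by blast
  qed
  define j where "j = i(e := (a+1,c))"
  have others: "\<And>v. v \<noteq> e \<Longrightarrow> i v \<in> F \<and> i v \<noteq> (a+1,c)"
  proof -
    fix v assume "v \<noteq> e"
    then have "i v \<noteq> (a,c)" using inj ie by (metis injD)
    moreover have iv: "i v \<in> range i" by (rule rangeI)
    ultimately show "i v \<in> F \<and> i v \<noteq> (a+1,c)" using rng qn by (metis insertE subsetD)
  qed
  have "strong_emb (\<le>) j F"
    unfolding strong_emb_def
  proof (intro conjI allI)
    show "inj j"
    proof (rule injI)
      fix x y assume jxy: "j x = j y"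
      show "x = y"
      proof (cases "x = e")
        case True
        then show ?thesis using jxy others[of y] unfolding j_def by (cases "y = e") auto
      next
        case False
        then show ?thesis using jxy others[of x] injD[OF inj, of x y] unfolding j_def
          by (cases "y = e") auto
      qed
    qed
    show "range j \<subseteq> F"
    proof
      fix z assume "z \<in> range j"
      then obtain v where "z = j v" by (metis rangeE)
      then show "z \<in> F" using others[of v] qF unfolding j_def by (cases "v = e") auto
    qed
    fix p p' :: 'a
    show "p \<le> p' \<longleftrightarrow> grid_le (j p) (j p')"
    proof (cases "p = e")
      case True
      show ?thesis
      proof (cases "p' = e")
        case True
        with \<open>p = e\<close> show ?thesis unfolding grid_le_def by simp
      next
        case False
        obtain x y where xy: "i p' = (x,y)" by fastforce
        from others[OF False] xy have "(x,y) \<in> F" by auto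
        then have "x \<noteq> a" using emp by auto
        then have "grid_le (a+1,c) (x,y) = grid_le (a,c) (x,y)"
          unfolding grid_le_def by auto
        then show ?thesis using ord[of p p'] True False xy ie unfolding j_def by simp
      qed
    next
      case False
      show ?thesis
      proof (cases "p' = e")
        case True
        obtain x y where xy: "i p = (x,y)" by fastforce
        from others[OF False] xy have "(x,y) \<in> F" "(x,y) \<noteq> (a+1,c)" by auto
        then have "x \<noteq> a" "x = a + 1 \<longrightarrow> c \<le> y" using emp mn by auto
        then have "grid_le (x,y) (a+1,c) = grid_le (x,y) (a,c)"
          using \<open>(x,y) \<noteq> (a+1,c)\<close> unfolding grid_le_def by auto
        then show ?thesis using ord[of p p'] True False xy ie unfolding j_def by simp
      next
        case False
        then show ?thesis using ord[of p p'] \<open>p \<noteq> e\<close> unfolding j_def by simp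
      qed
    qed
  qed
  with nc show False unfolding contains_strong_copy_def by blast
qed


lemma col_bound:
  fixes F :: "(nat \<times> nat) set"
  assumes sat: "strong_saturated ((\<le>)::'a::order \<Rightarrow> 'a \<Rightarrow> bool) (grid k l) F"
    and no_nb: "\<forall>k' l' (i :: 'a \<Rightarrow> nat \<times> nat) p q.
                 strong_emb (\<le>) i (grid k' l') \<longrightarrow> \<not> neighboring (i p) (i q)"
    and two: "(u::'a) \<noteq> v" and k1: "k \<ge> 1" and l1: "l \<ge> 1"
  shows "k \<le> card F"
proof -
  have FQ: "F \<subseteq> grid k l" and nc: "\<not> contains_strong_copy ((\<le>)::'a \<Rightarrow> 'a \<Rightarrow> bool) F"
    and satx: "\<forall>x\<in>grid k l - F. contains_strong_copy ((\<le>)::'a \<Rightarrow> 'a \<Rightarrow> bool) (insert x F)"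
    using sat unfolding strong_saturated_def by auto
  have no_nb': "\<forall>k' l' (i :: 'a \<Rightarrow> nat \<times> nat) p q.
                 strong_emb (\<le>) i (grid k' l') \<longrightarrow> \<not> neighboring (i p) (i q)"
    using no_nb by blast
  have finF: "finite F" using finite_subset[OF FQ grid_fin] .
  have Fne: "F \<noteq> {}"
  proof
    assume F0: "F = {}"
    have "(1,1) \<in> grid k l" using k1 l1 unfolding grid_def by auto
    with satx F0 obtain i :: "'a \<Rightarrow> nat \<times> nat" where i: "strong_emb (\<le>) i {(1,1)}"
      unfolding contains_strong_copy_def by auto
    then have "inj i" "range i \<subseteq> {(1,1)}" unfolding strong_emb_def by auto
    moreover have "i u \<in> range i" "i v \<in> range i" by (rule rangeI)+
    ultimately have "i u = i v" by (metis singletonD subsetD)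
    with \<open>inj i\<close> two show False by (metis injD)
  qed
  have hit: "\<exists>y. (a,y) \<in> F" if a: "1 \<le> a" "a \<le> k" for a
  proof (rule ccontr)
    assume "\<not> (\<exists>y. (a,y) \<in> F)"
    then have emp: "\<forall>y. (a,y) \<notin> F" by simp
    obtain x0 y0 where x0F: "(x0,y0) \<in> F" using Fne by auto
    then have x0g: "1 \<le> x0" "x0 \<le> k" using FQ unfolding grid_def by auto
    have "x0 \<noteq> a" using emp x0F by auto
    then consider "x0 < a" | "a < x0" by linarith
    then show False
    proof cases
      case 1
      define a0 where "a0 = (LEAST t. x0 \<le> t \<and> (\<forall>y. (t,y) \<notin> F))"
      have h: "x0 \<le> a0 \<and> (\<forall>y. (a0,y) \<notin> F)"
        unfolding a0_def by (rule LeastI[of _ a]) (use 1 emp in auto)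
      have "a0 \<le> a" unfolding a0_def by (rule Least_le) (use 1 emp in auto)
      have "a0 \<noteq> x0" using h x0F by auto
      then have a02: "a0 \<ge> 2" "x0 \<le> a0 - 1" using h x0g by auto
      have "\<not> (x0 \<le> a0 - 1 \<and> (\<forall>y. (a0 - 1,y) \<notin> F))"
        unfolding a0_def by (rule not_less_Least) (use a02 a0_def in auto)
      then obtain y1 where y1: "(a0-1,y1) \<in> F" using a02 by auto
      define Y where "Y = {y. (a0-1,y) \<in> F}"
      have finY: "finite Y"
      proof -
        have "Y \<subseteq> snd ` F" unfolding Y_def by force
        then show ?thesis using finF finite_subset by blast
      qed
      have "y1 \<in> Y" using y1 unfolding Y_def by simp
      then have cY: "Max Y \<in> Y" using finY Max_in by blast
      have mx: "\<forall>y. (a0-1,y) \<in> F \<longrightarrow> y \<le> Max Y" using finY unfolding Y_def by simp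
      have qF: "(a0-1, Max Y) \<in> F" using cY unfolding Y_def by simp
      then have "1 \<le> Max Y" "Max Y \<le> l" using FQ unfolding grid_def by auto
      then have pg: "(a0, Max Y) \<in> grid k l" using a02 \<open>a0 \<le> a\<close> a unfolding grid_def by auto
      show False using left_case[OF sat no_nb' pg _ qF a02(1) mx] h by blast
    next
      case 2
      define T where "T = {t. t \<le> x0 \<and> (\<forall>y. (t,y) \<notin> F)}"
      have finT: "finite T" unfolding T_def by simp
      have aT: "a \<in> T" unfolding T_def using 2 emp by auto
      define a0 where "a0 = Max T"
      have a0T: "a0 \<in> T" unfolding a0_def using finT aT Max_in by blast
      have "a \<le> a0" unfolding a0_def using finT aT Max_ge by blast
      have h: "a0 \<le> x0" "\<forall>y. (a0,y) \<notin> F" using a0T unfolding T_def by auto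
      have "a0 \<noteq> x0" using h x0F by auto
      then have a0x: "a0 + 1 \<le> x0" using h by auto
      have "a0 + 1 \<notin> T"
      proof
        assume "a0 + 1 \<in> T"
        then have "a0 + 1 \<le> a0" unfolding a0_def using finT Max_ge by blast
        then show False by simp
      qed
      then obtain y1 where y1: "(a0+1,y1) \<in> F" using a0x unfolding T_def by auto
      define Y where "Y = {y. (a0+1,y) \<in> F}"
      have finY: "finite Y"
      proof -
        have "Y \<subseteq> snd ` F" unfolding Y_def by force
        then show ?thesis using finF finite_subset by blast
      qed
      have "y1 \<in> Y" using y1 unfolding Y_def by simp
      then have cY: "Min Y \<in> Y" using finY Min_in by blast
      have mn: "\<forall>y. (a0+1,y) \<in> F \<longrightarrow> Min Y \<le> y" using finY unfolding Y_def by simp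
      have qF: "(a0+1, Min Y) \<in> F" using cY unfolding Y_def by simp
      then have "1 \<le> Min Y" "Min Y \<le> l" using FQ unfolding grid_def by auto
      then have pg: "(a0, Min Y) \<in> grid k l" using a0x x0g \<open>a \<le> a0\<close> a unfolding grid_def by auto
      show False using right_case[OF sat no_nb' pg h(2) qF mn] .
    qed
  qed
  have "{1..k} \<subseteq> fst ` F"
  proof
    fix a assume "a \<in> {1..k}"
    then obtain y where "(a,y) \<in> F" using hit by auto
    then show "a \<in> fst ` F" by force
  qed
  then have "card {1..k} \<le> card (fst ` F)" by (rule card_mono[OF finite_imageI[OF finF]])
  also have "\<dots> \<le> card F" using finF by (rule card_image_le)
  finally show ?thesis by simp
qed


lemma swap_emb:
  assumes "strong_emb le i G"
  shows "strong_emb le (prod.swap \<circ> i) (prod.swap ` G)"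
proof -
  have "inj i" "range i \<subseteq> G" "\<forall>p p'. le p p' \<longleftrightarrow> grid_le (i p) (i p')"
    using assms unfolding strong_emb_def by auto
  moreover have "inj (prod.swap \<circ> i)" using \<open>inj i\<close> by (simp add: inj_compose)
  moreover have "range (prod.swap \<circ> i) \<subseteq> prod.swap ` G"
  proof
    fix z assume "z \<in> range (prod.swap \<circ> i)"
    then obtain x where z: "z = prod.swap (i x)" by auto
    have "i x \<in> range i" by (rule rangeI)
    then have "i x \<in> G" using \<open>range i \<subseteq> G\<close> by (metis subsetD)
    then show "z \<in> prod.swap ` G" using z by simp
  qed
  moreover have "\<And>x y. grid_le (prod.swap x) (prod.swap y) = grid_le x y"
    unfolding grid_le_def by auto
  ultimately show ?thesis unfolding strong_emb_def by simp
qed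

lemma swap_contains:
  "contains_strong_copy le (prod.swap ` G) \<longleftrightarrow> contains_strong_copy le G"
proof
  assume "contains_strong_copy le (prod.swap ` G)"
  then obtain i where "strong_emb le i (prod.swap ` G)" unfolding contains_strong_copy_def by blast
  then have "strong_emb le (prod.swap \<circ> i) (prod.swap ` prod.swap ` G)" by (rule swap_emb)
  then show "contains_strong_copy le G" unfolding contains_strong_copy_def
    by (auto simp: image_comp)
next
  assume "contains_strong_copy le G"
  then obtain i where "strong_emb le i G" unfolding contains_strong_copy_def by blast
  then show "contains_strong_copy le (prod.swap ` G)" unfolding contains_strong_copy_def
    using swap_emb by blast
qed

lemma swap_grid: "prod.swap ` grid k l = grid l k"
  unfolding grid_def by auto

lemma swap_sat:
  assumes "strong_saturated le (grid k l) F"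
  shows "strong_saturated le (grid l k) (prod.swap ` F)"
proof -
  have FQ: "F \<subseteq> grid k l" and nc: "\<not> contains_strong_copy le F"
    and satx: "\<forall>x\<in>grid k l - F. contains_strong_copy le (insert x F)"
    using assms unfolding strong_saturated_def by auto
  have "prod.swap ` F \<subseteq> grid l k" using FQ swap_grid by blast
  moreover have "\<not> contains_strong_copy le (prod.swap ` F)" using nc swap_contains by blast
  moreover have "contains_strong_copy le (insert x (prod.swap ` F))" if x: "x \<in> grid l k - prod.swap ` F" for x
  proof -
    have "prod.swap x \<in> grid k l - F" using x swap_grid[of k l]
      by (metis (no_types, lifting) Diff_iff image_eqI imageE swap_swap)
    then have "contains_strong_copy le (insert (prod.swap x) F)" using satx by blast
    then have "contains_strong_copy le (prod.swap ` insert (prod.swap x) F)" using swap_contains by blast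
    then show ?thesis by simp
  qed
  ultimately show ?thesis unfolding strong_saturated_def by blast
qed

theorem theorem1p10:
  fixes k l :: nat
  assumes dim2: "order_dim ((<) :: 'a::{finite,order} \<Rightarrow> 'a \<Rightarrow> bool) = 2"
    and no_nb: "\<And>k' l' (i :: 'a \<Rightarrow> nat \<times> nat) p q.
                 strong_emb (\<le>) i (grid k' l') \<Longrightarrow> \<not> neighboring (i p) (i q)"
    and "k \<ge> 1" and "l \<ge> 1"
  shows "max k l \<le> sat_star (grid k l) ((\<le>) :: 'a \<Rightarrow> 'a \<Rightarrow> bool)"
proof -
  have no_nb': "\<forall>k' l' (i :: 'a \<Rightarrow> nat \<times> nat) p q.
                 strong_emb (\<le>) i (grid k' l') \<longrightarrow> \<not> neighboring (i p) (i q)"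
    using no_nb by blast
  obtain u v :: 'a where uv: "u \<noteq> v" using two_elems[OF dim2] by blast
  define S where "S = {card F | F. strong_saturated ((\<le>) :: 'a \<Rightarrow> 'a \<Rightarrow> bool) (grid k l) F}"
  define Fam where "Fam = {G. G \<subseteq> grid k l \<and> \<not> contains_strong_copy ((\<le>) :: 'a \<Rightarrow> 'a \<Rightarrow> bool) G}"
  have finFam: "finite Fam"
  proof -
    have "Fam \<subseteq> Pow (grid k l)" unfolding Fam_def by auto
    then show ?thesis using grid_fin finite_subset by blast
  qed
  have "{} \<in> Fam"
  proof -
    have "\<not> strong_emb ((\<le>) :: 'a \<Rightarrow> 'a \<Rightarrow> bool) i {}" for i
    proof
      assume "strong_emb ((\<le>) :: 'a \<Rightarrow> 'a \<Rightarrow> bool) i {}"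
      then have "range i \<subseteq> {}" unfolding strong_emb_def by simp
      moreover have "i u \<in> range i" by (rule rangeI)
      ultimately show False by blast
    qed
    then show ?thesis unfolding Fam_def contains_strong_copy_def by auto
  qed
  define m where "m = Max (card ` Fam)"
  have "m \<in> card ` Fam" unfolding m_def using finFam \<open>{} \<in> Fam\<close> by (intro Max_in) auto
  then obtain F where FF: "F \<in> Fam" and cF: "card F = m" by blast
  have mge: "card G \<le> m" if "G \<in> Fam" for G
    unfolding m_def using finFam that by (intro Max_ge) auto
  have "strong_saturated ((\<le>) :: 'a \<Rightarrow> 'a \<Rightarrow> bool) (grid k l) F"
    unfolding strong_saturated_def
  proof (intro conjI ballI)
    show "F \<subseteq> grid k l" "\<not> contains_strong_copy ((\<le>) :: 'a \<Rightarrow> 'a \<Rightarrow> bool) F" using FF unfolding Fam_def by auto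
    fix x assume x: "x \<in> grid k l - F"
    show "contains_strong_copy ((\<le>) :: 'a \<Rightarrow> 'a \<Rightarrow> bool) (insert x F)"
    proof (rule ccontr)
      assume "\<not> contains_strong_copy ((\<le>) :: 'a \<Rightarrow> 'a \<Rightarrow> bool) (insert x F)"
      then have "insert x F \<in> Fam" using x FF unfolding Fam_def by auto
      then have "card (insert x F) \<le> m" by (rule mge)
      moreover have "finite F" using FF grid_fin finite_subset unfolding Fam_def by blast
      ultimately show False using x cF by simp
    qed
  qed
  then have Sne: "S \<noteq> {}" unfolding S_def by blast
  have "max k l \<le> n" if "n \<in> S" for n
  proof -
    obtain G where G: "strong_saturated ((\<le>) :: 'a \<Rightarrow> 'a \<Rightarrow> bool) (grid k l) G" and n: "n = card G"
      using \<open>n \<in> S\<close> unfolding S_def by blast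
    have "k \<le> card G" using col_bound[OF G no_nb' uv] assms(3,4) by blast
    moreover have "l \<le> card (prod.swap ` G)"
      using col_bound[OF swap_sat[OF G] no_nb' uv] assms(3,4) by blast
    moreover have "card (prod.swap ` G) = card G" by (simp add: card_image)
    ultimately show ?thesis using n by simp
  qed
  then have "max k l \<le> Inf S" using Sne by (intro cInf_greatest) auto
  then show ?thesis unfolding sat_star_def S_def by simp
qed

end
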